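(* Let $K:X\times X\to\mathbb{C}$ be positive definite and assume that the matrix $K_F=(K(y,z))_{y,z\in F}$ is invertible for every finite $F\subset X$. Let $x\in X$. Then $\delta_x\in\mathscr{H}(K)$ if and only if $\sup\{(K_F^{-1})_{x,x}: F\subset X\text{ finite},\ x\in F\}<\infty$, and in that case $\|\delta_x\|^2_{\mathscr{H}(K)}$ equals this supremum.
   Context: $\delta_x$ is the function on $X$ equal to $1$ at $x$ and $0$ elsewhere; $\mathscr{H}(K)$ is the reproducing kernel Hilbert space of $K$ (completion of span of $K(\cdot,x)$ with $\langle K(\cdot,x),K(\cdot,y)\rangle=K(x,y)$, reproducing property $\langle K(\cdot,x),h\rangle=h(x)$). *)

theory Defs
  imports Complex_Main
begin

text \<open>A finite linear combination \<Sum>x\<in>S. c x K(\<cdot>,x) is represented by a finite set S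
and coefficients c (only values on S matter).\<close>

definition qform :: "('a \<Rightarrow> 'a \<Rightarrow> complex) \<Rightarrow> 'a set \<Rightarrow> ('a \<Rightarrow> complex) \<Rightarrow> complex" where
  "qform K S c = (\<Sum>x\<in>S. \<Sum>y\<in>S. cnj (c x) * c y * K x y)"

definition pos_def_kernel :: "('a \<Rightarrow> 'a \<Rightarrow> complex) \<Rightarrow> bool" where
  "pos_def_kernel K \<longleftrightarrow> (\<forall>S c. finite S \<longrightarrow> Im (qform K S c) = 0 \<and> Re (qform K S c) \<ge> 0)"

definition kfun :: "('a \<Rightarrow> 'a \<Rightarrow> complex) \<Rightarrow> 'a set \<Rightarrow> ('a \<Rightarrow> complex) \<Rightarrow> 'a \<Rightarrow> complex" where
  "kfun K S c = (\<lambda>y. \<Sum>x\<in>S. c x * K y x)"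

definition restr :: "'a set \<Rightarrow> ('a \<Rightarrow> complex) \<Rightarrow> 'a \<Rightarrow> complex" where
  "restr S c = (\<lambda>x. if x \<in> S then c x else 0)"

definition diff_norm2 :: "('a \<Rightarrow> 'a \<Rightarrow> complex) \<Rightarrow> 'a set \<Rightarrow> ('a \<Rightarrow> complex) \<Rightarrow> 'a set \<Rightarrow> ('a \<Rightarrow> complex) \<Rightarrow> real" where
  "diff_norm2 K S c T d = Re (qform K (S \<union> T) (\<lambda>x. restr S c x - restr T d x))"

text \<open>The completion H(K) is realised as the set of such
pointwise limits (standard realisation of the completion as functions on X).\<close>
definition approx_seq :: "('a \<Rightarrow> 'a \<Rightarrow> complex) \<Rightarrow> ('a \<Rightarrow> complex) \<Rightarrow> (nat \<Rightarrow> 'a set) \<Rightarrow> (nat \<Rightarrow> 'a \<Rightarrow> complex) \<Rightarrow> bool" where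
  "approx_seq K f S c \<longleftrightarrow> (\<forall>n. finite (S n)) \<and>
     (\<forall>e>0. \<exists>N. \<forall>m\<ge>N. \<forall>n\<ge>N. diff_norm2 K (S m) (c m) (S n) (c n) < e) \<and>
     (\<forall>y. (\<lambda>n. kfun K (S n) (c n) y) \<longlonglongrightarrow> f y)"

definition in_RKHS :: "('a \<Rightarrow> 'a \<Rightarrow> complex) \<Rightarrow> ('a \<Rightarrow> complex) \<Rightarrow> bool" where
  "in_RKHS K f \<longleftrightarrow> (\<exists>S c. approx_seq K f S c)"

definition RKHS_norm2 :: "('a \<Rightarrow> 'a \<Rightarrow> complex) \<Rightarrow> ('a \<Rightarrow> complex) \<Rightarrow> real" where
  "RKHS_norm2 K f = (SOME r. \<exists>S c. approx_seq K f S c \<and> (\<lambda>n. Re (qform K (S n) (c n))) \<longlonglongrightarrow> r)"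

definition delta :: "'a \<Rightarrow> 'a \<Rightarrow> complex" where
  "delta x = (\<lambda>y. if y = x then 1 else 0)"

definition is_inv_on :: "('a \<Rightarrow> 'a \<Rightarrow> complex) \<Rightarrow> 'a set \<Rightarrow> ('a \<Rightarrow> 'a \<Rightarrow> complex) \<Rightarrow> bool" where
  "is_inv_on K F M \<longleftrightarrow>
     (\<forall>y\<in>F. \<forall>w\<in>F. (\<Sum>z\<in>F. K y z * M z w) = (if y = w then 1 else 0)) \<and>
     (\<forall>y\<in>F. \<forall>w\<in>F. (\<Sum>z\<in>F. M y z * K z w) = (if y = w then 1 else 0))"

definition Kmat_invertible :: "('a \<Rightarrow> 'a \<Rightarrow> complex) \<Rightarrow> 'a set \<Rightarrow> bool" where
  "Kmat_invertible K F \<longleftrightarrow> (\<exists>M. is_inv_on K F M)"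

definition Kinv :: "('a \<Rightarrow> 'a \<Rightarrow> complex) \<Rightarrow> 'a set \<Rightarrow> 'a \<Rightarrow> 'a \<Rightarrow> complex" where
  "Kinv K F = (SOME M. is_inv_on K F M)"

end

theory Submission
  imports Defs
begin



definition B :: "('a \<Rightarrow> 'a \<Rightarrow> complex) \<Rightarrow> 'a set \<Rightarrow> ('a \<Rightarrow> complex) \<Rightarrow> ('a \<Rightarrow> complex) \<Rightarrow> complex" where
  "B K U u v = (\<Sum>x\<in>U. \<Sum>y\<in>U. cnj (u x) * v y * K x y)"

definition vanish :: "'a set \<Rightarrow> ('a \<Rightarrow> complex) \<Rightarrow> bool" where
  "vanish U u \<longleftrightarrow> (\<forall>z. z \<notin> U \<longrightarrow> u z = 0)"

lemma pdk:
  assumes "pos_def_kernel K" "finite S"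
  shows "Im (qform K S c) = 0" "Re (qform K S c) \<ge> 0"
  using assms(1)[unfolded pos_def_kernel_def, rule_format, OF assms(2), of c] by auto

lemma herm:
  assumes "pos_def_kernel K"
  shows "K y x = cnj (K x y)"
proof -
  have im0: "Im (K z z) = 0" for z
    using pdk(1)[OF assms, of "{z}" "\<lambda>_. 1"] by (simp add: qform_def)
  show ?thesis
  proof (cases "x = y")
    case True
    then show ?thesis using im0[of x] by (simp add: complex_eq_iff)
  next
    case False
    have "Im (qform K {x,y} (\<lambda>_. 1)) = 0" by (rule pdk(1)[OF assms]) simp
    then have h1: "Im (K x y) + Im (K y x) = 0" using False im0[of x] im0[of y] by (simp add: qform_def)
    have "Im (qform K {x,y} (\<lambda>z. if z = x then 1 else \<i>)) = 0" by (rule pdk(1)[OF assms]) simp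
    then have h2: "Re (K x y) - Re (K y x) = 0" using False im0[of x] im0[of y] by (simp add: qform_def)
    show ?thesis using h1 h2 by (simp add: complex_eq_iff)
  qed
qed

lemma B_qform: "B K U u u = qform K U u" by (simp add: B_def qform_def)

lemma B_swap:
  assumes "pos_def_kernel K"
  shows "B K U v u = cnj (B K U u v)"
proof -
  have "B K U v u = (\<Sum>y\<in>U. \<Sum>x\<in>U. cnj (v y) * u x * K y x)" by (simp add: B_def)
  also have "\<dots> = (\<Sum>x\<in>U. \<Sum>y\<in>U. cnj (v y) * u x * K y x)" by (rule sum.swap)
  also have "\<dots> = (\<Sum>x\<in>U. \<Sum>y\<in>U. cnj (cnj (u x) * v y * K x y))"
  proof (intro sum.cong refl)
    fix x y
    have "K y x = cnj (K x y)" by (rule herm[OF assms])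
    then show "cnj (v y) * u x * K y x = cnj (cnj (u x) * v y * K x y)" by simp
  qed
  also have "\<dots> = cnj (B K U u v)" by (simp add: B_def)
  finally show ?thesis .
qed

lemma B_pos:
  assumes "pos_def_kernel K" "finite U"
  shows "Im (B K U u u) = 0" "Re (B K U u u) \<ge> 0"
  unfolding B_qform using pdk[OF assms] by auto

lemma B_repr: "B K U u v = (\<Sum>y\<in>U. cnj (u y) * kfun K U v y)"
  by (simp add: B_def kfun_def sum_distrib_left mult.commute mult.left_commute)

lemma kfun_super:
  assumes "finite V" "U \<subseteq> V" "vanish U v"
  shows "kfun K V v y = kfun K U v y"
  unfolding kfun_def
  by (rule sum.mono_neutral_right) (use assms in \<open>auto simp: vanish_def\<close>)

lemma B_super:
  assumes "finite V" "U \<subseteq> V" "vanish U u" "vanish U v"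
  shows "B K V u v = B K U u v"
proof -
  have "B K V u v = (\<Sum>y\<in>V. cnj (u y) * kfun K U v y)"
    using kfun_super[OF assms(1,2,4)] by (simp add: B_repr)
  also have "\<dots> = (\<Sum>y\<in>U. cnj (u y) * kfun K U v y)"
    by (rule sum.mono_neutral_right) (use assms in \<open>auto simp: vanish_def\<close>)
  finally show ?thesis by (simp add: B_repr)
qed

lemma B_expand:
  "B K U (\<lambda>z. u z - t * v z) (\<lambda>z. u z - t * v z) =
     B K U u u - t * B K U u v - cnj t * B K U v u + cnj t * t * B K U v v"
proof -
  have "\<And>x y. cnj (u x - t * v x) * (u y - t * v y) * K x y =
     cnj (u x) * u y * K x y - t * (cnj (u x) * v y * K x y) - cnj t * (cnj (v x) * u y * K x y)
     + cnj t * t * (cnj (v x) * v y * K x y)"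
    by (simp add: algebra_simps)
  then show ?thesis
    by (simp add: B_def sum.distrib sum_subtractf sum_distrib_left)
qed

lemma B_diff2: "B K U u (\<lambda>z. v z - w z) = B K U u v - B K U u w"
  by (simp add: B_def sum_subtractf algebra_simps)

lemma B_negswap: "B K U (\<lambda>z. u z - v z) (\<lambda>z. u z - v z) = B K U (\<lambda>z. v z - u z) (\<lambda>z. v z - u z)"
  by (simp add: B_def algebra_simps)

lemma kfun_diff: "kfun K U (\<lambda>z. u z - v z) y = kfun K U u y - kfun K U v y"
  by (simp add: kfun_def sum_subtractf algebra_simps)

lemma B_CS:
  assumes pd: "pos_def_kernel K" and fin: "finite U"
  shows "(cmod (B K U u v))^2 \<le> Re (B K U u u) * Re (B K U v v)"
proof -
  define b where "b = B K U u v"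
  define p where "p = Re (B K U u u)"
  define q where "q = Re (B K U v v)"
  have p0: "p \<ge> 0" and q0: "q \<ge> 0" using B_pos[OF pd fin] unfolding p_def q_def by auto
  have Bvv: "B K U v v = of_real q" using B_pos[OF pd fin, of v] unfolding q_def by (simp add: complex_eq_iff)
  have nb: "b * cnj b = of_real ((cmod b)^2)" using complex_norm_square[of b] by simp
  have key: "0 \<le> p - 2*t*(cmod b)^2 + t^2 * (cmod b)^2 * q" for t :: real
  proof -
    define a where "a = of_real t * cnj b"
    have "0 \<le> Re (B K U (\<lambda>z. u z - a * v z) (\<lambda>z. u z - a * v z))" using B_pos[OF pd fin] by simp
    also have "B K U (\<lambda>z. u z - a * v z) (\<lambda>z. u z - a * v z)
        = B K U u u - a * b - cnj a * cnj b + cnj a * a * of_real q"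
      unfolding B_expand b_def Bvv B_swap[OF pd, of U v u] by simp
    also have "\<dots> = B K U u u - of_real (2*t*(cmod b)^2) + of_real (t^2 * (cmod b)^2 * q)"
    proof -
      have "a * b = of_real t * (b * cnj b)" "cnj a * cnj b = of_real t * (b * cnj b)"
           "cnj a * a = of_real (t^2) * (b * cnj b)"
        unfolding a_def by (simp_all add: power2_eq_square algebra_simps)
      then show ?thesis unfolding nb by (simp add: algebra_simps)
    qed
    finally show ?thesis unfolding p_def by simp
  qed
  show ?thesis
  proof (cases "q = 0")
    case True
    have "b = 0"
    proof (rule ccontr)
      assume "b \<noteq> 0"
      then have nb0: "(cmod b)^2 > 0" by simp
      have "0 \<le> p - 2*((p+1)/(2*(cmod b)^2))*(cmod b)^2" using key[of "(p+1)/(2*(cmod b)^2)"] True by simp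
      also have "\<dots> = -1" using nb0 by (simp add: field_simps)
      finally show False by simp
    qed
    then show ?thesis using p0 q0 unfolding b_def p_def q_def by simp
  next
    case False
    then have qp: "q > 0" using q0 by simp
    have "0 \<le> p - 2*(1/q)*(cmod b)^2 + (1/q)^2 * (cmod b)^2 * q" by (rule key)
    also have "\<dots> = p - (cmod b)^2 / q" using qp by (simp add: field_simps power2_eq_square)
    finally have "(cmod b)^2 / q \<le> p" by simp
    then have "(cmod b)^2 \<le> p * q" using qp by (simp add: field_simps)
    then show ?thesis unfolding b_def p_def q_def .
  qed
qed

lemma B_par:
  assumes pd: "pos_def_kernel K" and fin: "finite U"
  shows "Re (B K U a a) \<le> 2 * Re (B K U b b) + 2 * Re (B K U (\<lambda>z. a z - b z) (\<lambda>z. a z - b z))"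
proof -
  define v where "v = (\<lambda>z. a z - b z)"
  have e1: "B K U (\<lambda>z. b z - (-1) * v z) (\<lambda>z. b z - (-1) * v z) = B K U b b + B K U b v + B K U v b + B K U v v"
    unfolding B_expand by simp
  have e2: "B K U (\<lambda>z. b z - 1 * v z) (\<lambda>z. b z - 1 * v z) = B K U b b - B K U b v - B K U v b + B K U v v"
    unfolding B_expand by simp
  have "(\<lambda>z. b z - (-1) * v z) = a" unfolding v_def by auto
  then have "Re (B K U a a) + Re (B K U (\<lambda>z. b z - 1 * v z) (\<lambda>z. b z - 1 * v z)) = 2 * Re (B K U b b) + 2 * Re (B K U v v)"
    using e1 e2 by simp
  moreover have "0 \<le> Re (B K U (\<lambda>z. b z - 1 * v z) (\<lambda>z. b z - 1 * v z))" using B_pos[OF pd fin] by blast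
  ultimately show ?thesis unfolding v_def by linarith
qed
definition gco :: "('a \<Rightarrow> 'a \<Rightarrow> complex) \<Rightarrow> 'a set \<Rightarrow> 'a \<Rightarrow> 'a \<Rightarrow> complex" where
  "gco K F x = (\<lambda>z. if z \<in> F then Kinv K F z x else 0)"

definition mm :: "('a \<Rightarrow> 'a \<Rightarrow> complex) \<Rightarrow> 'a set \<Rightarrow> 'a \<Rightarrow> real" where
  "mm K F x = Re (Kinv K F x x)"

lemma Kinv_inv: "Kmat_invertible K F \<Longrightarrow> is_inv_on K F (Kinv K F)"
  unfolding Kinv_def Kmat_invertible_def by (metis someI_ex)

lemma gco_vanish: "vanish F (gco K F x)"
  by (simp add: vanish_def gco_def)

lemma B_expand1:
  "B K U (\<lambda>z. u z - v z) (\<lambda>z. u z - v z) = B K U u u - B K U u v - B K U v u + B K U v v"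
  using B_expand[of K U u 1 v] by simp

lemma g_eval:
  assumes "Kmat_invertible K F" "y \<in> F" "x \<in> F"
  shows "kfun K F (gco K F x) y = delta x y"
proof -
  have "kfun K F (gco K F x) y = (\<Sum>z\<in>F. K y z * Kinv K F z x)"
    unfolding kfun_def gco_def by (intro sum.cong refl) (simp add: mult.commute)
  also have "\<dots> = (if y = x then 1 else 0)"
    using Kinv_inv[OF assms(1)] assms(2,3) unfolding is_inv_on_def by blast
  finally show ?thesis by (simp add: delta_def)
qed

lemma g_repr:
  assumes "Kmat_invertible K F" "x \<in> F" "finite F"
  shows "B K F u (gco K F x) = cnj (u x)"
proof -
  have "B K F u (gco K F x) = (\<Sum>y\<in>F. cnj (u y) * delta x y)"
    unfolding B_repr using g_eval[OF assms(1) _ assms(2)] by simp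
  also have "\<dots> = (\<Sum>y\<in>F. if y = x then cnj (u y) else 0)"
    by (intro sum.cong refl) (simp add: delta_def)
  also have "\<dots> = cnj (u x)" using assms(2) sum.delta'[of F x "\<lambda>y. cnj (u y)"]
    by (simp add: assms(3))
  finally show ?thesis .
qed

lemma g_norm:
  assumes "Kmat_invertible K F" "x \<in> F" "finite F"
  shows "B K F (gco K F x) (gco K F x) = cnj (Kinv K F x x)"
  using g_repr[OF assms] assms(2) by (simp add: gco_def)

lemma mm_nonneg:
  assumes "pos_def_kernel K" "Kmat_invertible K F" "x \<in> F" "finite F"
  shows "0 \<le> mm K F x"
  using B_pos(2)[OF assms(1,4), of "gco K F x"] unfolding g_norm[OF assms(2-4)] mm_def by simp

lemma g_mono:
  assumes pd: "pos_def_kernel K" and iF: "Kmat_invertible K F" and iG: "Kmat_invertible K G"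
    and fG: "finite G" and FG: "F \<subseteq> G" and xF: "x \<in> F"
  shows "Re (B K G (\<lambda>z. gco K G x z - gco K F x z) (\<lambda>z. gco K G x z - gco K F x z)) = mm K G x - mm K F x"
proof -
  have fF: "finite F" using fG FG finite_subset by blast
  have xG: "x \<in> G" using xF FG by blast
  have "B K G (gco K F x) (gco K F x) = B K F (gco K F x) (gco K F x)"
    by (rule B_super[OF fG FG gco_vanish gco_vanish])
  also have "\<dots> = cnj (Kinv K F x x)" by (rule g_norm[OF iF xF fF])
  finally have e1: "B K G (gco K F x) (gco K F x) = cnj (Kinv K F x x)" .
  have e2: "B K G (gco K F x) (gco K G x) = cnj (Kinv K F x x)"
    using g_repr[OF iG xG fG, of "gco K F x"] xF by (simp add: gco_def)
  have e3: "B K G (gco K G x) (gco K F x) = Kinv K F x x"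
    using B_swap[OF pd, of G "gco K G x" "gco K F x"] e2 by simp
  have e4: "B K G (gco K G x) (gco K G x) = cnj (Kinv K G x x)" by (rule g_norm[OF iG xG fG])
  show ?thesis unfolding B_expand1 e1 e2 e3 e4 mm_def by simp
qed

lemma mm_mono:
  assumes pd: "pos_def_kernel K" and iF: "Kmat_invertible K F" and iG: "Kmat_invertible K G"
    and fG: "finite G" and FG: "F \<subseteq> G" and xF: "x \<in> F"
  shows "mm K F x \<le> mm K G x"
  using g_mono[OF assms] B_pos(2)[OF pd fG] by (metis diff_ge_0_iff_ge)

lemma pt_bound:
  assumes pd: "pos_def_kernel K" and fU: "finite U" and yU: "y \<in> U"
  shows "(cmod (kfun K U u y))^2 \<le> Re (B K U u u) * Re (K y y)"
proof -
  define e where "e = (\<lambda>z. if z = y then (1::complex) else 0)"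
  have ke: "kfun K U e z = K z y" for z
  proof -
    have "kfun K U e z = (\<Sum>x\<in>U. if x = y then K z x else 0)"
      unfolding kfun_def e_def by (intro sum.cong refl) simp
    also have "\<dots> = K z y" using fU yU by simp
    finally show ?thesis .
  qed
  have "B K U e u = (\<Sum>z\<in>U. if z = y then kfun K U u z else 0)"
    unfolding B_repr e_def by (intro sum.cong refl) simp
  also have "\<dots> = kfun K U u y" using fU yU by simp
  finally have b1: "B K U e u = kfun K U u y" .
  have "B K U e e = (\<Sum>z\<in>U. if z = y then K z y else 0)"
    unfolding B_repr ke by (intro sum.cong refl) (simp add: e_def)
  also have "\<dots> = K y y" using fU yU by simp
  finally have b2: "B K U e e = K y y" .
  show ?thesis using B_CS[OF pd fU, of e u] unfolding b1 b2 by (simp add: mult.commute)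
qed
lemma restr_vanish: "vanish S (restr S c)"
  by (simp add: vanish_def restr_def)

lemma qform_restr: "qform K S c = B K S (restr S c) (restr S c)"
  unfolding qform_def B_def restr_def by (intro sum.cong refl) simp

lemma kfun_restr: "kfun K S c y = kfun K S (restr S c) y"
  unfolding kfun_def restr_def by (intro sum.cong refl) simp

lemma diff_restr: "diff_norm2 K S c T d = Re (B K (S \<union> T) (\<lambda>z. restr S c z - restr T d z) (\<lambda>z. restr S c z - restr T d z))"
  unfolding diff_norm2_def B_qform ..

lemma qform_super:
  assumes "finite T" "S \<subseteq> T"
  shows "B K T (restr S c) (restr S c) = qform K S c"
  unfolding qform_restr by (rule B_super[OF assms restr_vanish restr_vanish])

lemma LB:
  assumes pd: "pos_def_kernel K" and iF: "Kmat_invertible K F"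
    and ap: "approx_seq K (delta x) S c" and fF: "finite F" and xF: "x \<in> F" and ep: "\<epsilon> > 0"
  shows "eventually (\<lambda>n. mm K F x - \<epsilon> < Re (qform K (S n) (c n))) sequentially"
proof -
  define g where "g = gco K F x"
  define f where "f = (\<lambda>n. restr (S n) (c n))"
  have fS: "finite (S n)" for n using ap unfolding approx_seq_def by blast
  have lim: "(\<lambda>n. kfun K (S n) (c n) y) \<longlonglongrightarrow> delta x y" for y using ap unfolding approx_seq_def by blast
  define U where "U = (\<lambda>n. S n \<union> F)"
  have fU: "finite (U n)" for n using fS fF unfolding U_def by blast
  define \<beta> where "\<beta> = (\<lambda>n. B K (U n) g (f n))"
  have c1: "\<beta> n = (\<Sum>y\<in>F. cnj (g y) * kfun K (S n) (c n) y)" for n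
  proof -
    have "\<beta> n = (\<Sum>y\<in>U n. cnj (g y) * kfun K (U n) (f n) y)" unfolding \<beta>_def B_repr ..
    also have "\<dots> = (\<Sum>y\<in>F. cnj (g y) * kfun K (U n) (f n) y)"
      by (rule sum.mono_neutral_right) (use fU in \<open>auto simp: U_def g_def gco_def\<close>)
    also have "\<dots> = (\<Sum>y\<in>F. cnj (g y) * kfun K (S n) (c n) y)"
    proof (intro sum.cong refl)
      fix y
      have "kfun K (U n) (f n) y = kfun K (S n) (f n) y"
        unfolding f_def by (rule kfun_super[OF fU _ restr_vanish]) (simp add: U_def)
      then show "cnj (g y) * kfun K (U n) (f n) y = cnj (g y) * kfun K (S n) (c n) y"
        unfolding f_def kfun_restr[of K "S n" "c n"] by simp
    qed
    finally show ?thesis .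
  qed
  have "(\<lambda>n. \<Sum>y\<in>F. cnj (g y) * kfun K (S n) (c n) y) \<longlonglongrightarrow> (\<Sum>y\<in>F. cnj (g y) * delta x y)"
    by (intro tendsto_intros lim)
  also have "(\<Sum>y\<in>F. cnj (g y) * delta x y) = (\<Sum>y\<in>F. if y = x then cnj (g y) else 0)"
    by (intro sum.cong refl) (simp add: delta_def)
  also have "\<dots> = cnj (Kinv K F x x)" using fF xF by (simp add: g_def gco_def)
  finally have "\<beta> \<longlonglongrightarrow> cnj (Kinv K F x x)" unfolding c1[symmetric] by simp
  then have "(\<lambda>n. Re (\<beta> n)) \<longlonglongrightarrow> mm K F x" unfolding mm_def using tendsto_Re by fastforce
  then have ev: "eventually (\<lambda>n. mm K F x - \<epsilon>/2 < Re (\<beta> n)) sequentially"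
    using ep by (intro order_tendstoD(1)) auto
  have c3: "2 * Re (\<beta> n) - mm K F x \<le> Re (qform K (S n) (c n))" for n
  proof -
    have SU: "S n \<subseteq> U n" "F \<subseteq> U n" unfolding U_def by auto
    have "0 \<le> Re (B K (U n) (\<lambda>z. f n z - g z) (\<lambda>z. f n z - g z))" using B_pos[OF pd fU] by blast
    also have "\<dots> = Re (B K (U n) (f n) (f n)) - Re (B K (U n) (f n) g) - Re (B K (U n) g (f n)) + Re (B K (U n) g g)"
      unfolding B_expand1 by simp
    also have "B K (U n) (f n) (f n) = qform K (S n) (c n)" unfolding f_def by (rule qform_super[OF fU SU(1)])
    also have "Re (B K (U n) (f n) g) = Re (\<beta> n)" unfolding \<beta>_def B_swap[OF pd, of "U n" "f n" g] by simp
    also have "B K (U n) g g = B K F g g" unfolding g_def by (rule B_super[OF fU SU(2) gco_vanish gco_vanish])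
    also have "\<dots> = cnj (Kinv K F x x)" unfolding g_def by (rule g_norm[OF iF xF fF])
    finally show ?thesis unfolding \<beta>_def mm_def by simp
  qed
  show ?thesis using ev
  proof (rule eventually_mono)
    fix n assume "mm K F x - \<epsilon>/2 < Re (\<beta> n)"
    then show "mm K F x - \<epsilon> < Re (qform K (S n) (c n))" using c3[of n] ep by linarith
  qed
qed
lemma approx_bound:
  assumes pd: "pos_def_kernel K" and ap: "approx_seq K h S c"
  shows "\<exists>C. eventually (\<lambda>n. Re (qform K (S n) (c n)) \<le> C) sequentially"
proof -
  have fS: "finite (S n)" for n using ap unfolding approx_seq_def by blast
  obtain N where N: "\<And>m n. m \<ge> N \<Longrightarrow> n \<ge> N \<Longrightarrow> diff_norm2 K (S m) (c m) (S n) (c n) < 1"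
    using ap unfolding approx_seq_def by (meson zero_less_one)
  have "Re (qform K (S n) (c n)) \<le> 2 * Re (qform K (S N) (c N)) + 2" if "n \<ge> N" for n
  proof -
    define U where "U = S n \<union> S N"
    have fU: "finite U" using fS unfolding U_def by blast
    have "Re (B K U (restr (S n) (c n)) (restr (S n) (c n))) \<le> 2 * Re (B K U (restr (S N) (c N)) (restr (S N) (c N)))
       + 2 * Re (B K U (\<lambda>z. restr (S n) (c n) z - restr (S N) (c N) z) (\<lambda>z. restr (S n) (c n) z - restr (S N) (c N) z))"
      by (rule B_par[OF pd fU])
    also have "B K U (restr (S n) (c n)) (restr (S n) (c n)) = qform K (S n) (c n)"
      by (rule qform_super[OF fU]) (simp add: U_def)
    also have "B K U (restr (S N) (c N)) (restr (S N) (c N)) = qform K (S N) (c N)"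
      by (rule qform_super[OF fU]) (simp add: U_def)
    also have "Re (B K U (\<lambda>z. restr (S n) (c n) z - restr (S N) (c N) z) (\<lambda>z. restr (S n) (c n) z - restr (S N) (c N) z))
       = diff_norm2 K (S n) (c n) (S N) (c N)" unfolding diff_restr U_def ..
    finally show ?thesis using N[OF that order.refl] by linarith
  qed
  then show ?thesis unfolding eventually_sequentially by blast
qed

lemma approx_bdd:
  assumes pd: "pos_def_kernel K" and inv: "\<And>F. finite F \<Longrightarrow> Kmat_invertible K F"
    and ap: "approx_seq K (delta x) S c"
  shows "bdd_above {Re (Kinv K F x x) | F. finite F \<and> x \<in> F}"
proof -
  obtain C where C: "eventually (\<lambda>n. Re (qform K (S n) (c n)) \<le> C) sequentially"
    using approx_bound[OF pd ap] by blast
  have "mm K F x \<le> C" if "finite F" "x \<in> F" for F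
  proof (rule ccontr)
    assume "\<not> mm K F x \<le> C"
    then have "mm K F x - C > 0" by simp
    from LB[OF pd inv[OF that(1)] ap that this] C
    have "eventually (\<lambda>n. False) sequentially"
      by eventually_elim simp
    then show False by simp
  qed
  then show ?thesis unfolding bdd_above_def mm_def by blast
qed
lemma UB:
  assumes pd: "pos_def_kernel K" and inv: "\<And>F. finite F \<Longrightarrow> Kmat_invertible K F"
    and ap: "approx_seq K (delta x) S c"
    and bdd: "bdd_above {Re (Kinv K F x x) | F. finite F \<and> x \<in> F}"
    and dp: "\<delta> > 0"
  shows "eventually (\<lambda>n. Re (qform K (S n) (c n)) \<le> (sqrt (Sup {Re (Kinv K F x x) | F. finite F \<and> x \<in> F}) + sqrt \<delta>)^2) sequentially"
proof -
  define A where "A = {Re (Kinv K F x x) | F. finite F \<and> x \<in> F}"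
  define s where "s = Sup A"
  have fS: "finite (S n)" for n using ap unfolding approx_seq_def by blast
  have lim: "(\<lambda>n. kfun K (S n) (c n) y) \<longlonglongrightarrow> delta x y" for y using ap unfolding approx_seq_def by blast
  obtain N where N: "\<And>m n. m \<ge> N \<Longrightarrow> n \<ge> N \<Longrightarrow> diff_norm2 K (S m) (c m) (S n) (c n) < \<delta>"
    using ap dp unfolding approx_seq_def by meson
  have "Re (qform K (S m) (c m)) \<le> (sqrt s + sqrt \<delta>)^2" if mN: "m \<ge> N" for m
  proof -
    define f where "f = restr (S m) (c m)"
    define Q where "Q = B K (S m) f f"
    define q where "q = Re Q"
    define \<alpha> where "\<alpha> = cnj (f x)"
    have q0: "q \<ge> 0" unfolding q_def Q_def using B_pos[OF pd fS] by blast
    have Qq: "Q = of_real q" unfolding q_def Q_def using B_pos(1)[OF pd fS] by (simp add: complex_eq_iff)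
    define F where "F = insert x (S m)"
    have fF: "finite F" using fS unfolding F_def by blast
    have SF: "S m \<subseteq> F" unfolding F_def by blast
    have xF: "x \<in> F" unfolding F_def by blast
    define g where "g = gco K F x"
    have a1: "B K F f g = \<alpha>" unfolding g_def \<alpha>_def by (rule g_repr[OF inv[OF fF] xF fF])
    have a2: "B K F f f = Q" unfolding Q_def f_def by (rule B_super[OF fF SF restr_vanish restr_vanish])
    have a3: "Re (B K F g g) = mm K F x" unfolding g_def g_norm[OF inv[OF fF] xF fF] mm_def by simp
    have ms: "mm K F x \<le> s" unfolding s_def mm_def using bdd fF xF unfolding A_def by (intro cSup_upper) auto
    have s0: "s \<ge> 0" using ms mm_nonneg[OF pd inv[OF fF] xF fF] by linarith
    from ms have "(cmod \<alpha>)^2 \<le> q * s" using B_CS[OF pd fF, of f g] q0 unfolding a1 a2 a3 q_def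
      by (meson mult_left_mono order_trans)
    then have ca: "cmod \<alpha> \<le> sqrt (q * s)" using real_le_rsqrt by blast
    have ev: "eventually (\<lambda>n. cmod (Q - B K (S m \<union> S n) f (restr (S n) (c n))) \<le> sqrt (q * \<delta>)) sequentially"
      unfolding eventually_sequentially
    proof (intro exI allI impI)
      fix n assume nN: "n \<ge> N"
      define U where "U = S m \<union> S n"
      have fU: "finite U" using fS unfolding U_def by blast
      define fn where "fn = restr (S n) (c n)"
      have "Q = B K U f f" unfolding Q_def f_def by (rule B_super[symmetric, OF fU _ restr_vanish restr_vanish]) (simp add: U_def)
      then have "Q - B K U f fn = B K U f (\<lambda>z. f z - fn z)" by (simp add: B_diff2)
      then have "(cmod (Q - B K U f fn))^2 \<le> Re (B K U f f) * Re (B K U (\<lambda>z. f z - fn z) (\<lambda>z. f z - fn z))"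
        using B_CS[OF pd fU] by simp
      also have "Re (B K U f f) = q" using \<open>Q = B K U f f\<close> q_def by simp
      also have "Re (B K U (\<lambda>z. f z - fn z) (\<lambda>z. f z - fn z)) = diff_norm2 K (S m) (c m) (S n) (c n)"
        unfolding diff_restr U_def f_def fn_def ..
      also have "q * \<dots> \<le> q * \<delta>" using N[OF mN nN] q0 by (simp add: mult_left_mono)
      finally show "cmod (Q - B K (S m \<union> S n) f (restr (S n) (c n))) \<le> sqrt (q * \<delta>)"
        unfolding U_def fn_def using real_le_rsqrt by blast
    qed
    have gam: "B K (S m \<union> S n) f (restr (S n) (c n)) = (\<Sum>y\<in>S m. cnj (f y) * kfun K (S n) (c n) y)" for n
    proof -
      define U where "U = S m \<union> S n"
      have fU: "finite U" using fS unfolding U_def by blast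
      have "B K U f (restr (S n) (c n)) = (\<Sum>y\<in>U. cnj (f y) * kfun K U (restr (S n) (c n)) y)" unfolding B_repr ..
      also have "\<dots> = (\<Sum>y\<in>S m. cnj (f y) * kfun K U (restr (S n) (c n)) y)"
        by (rule sum.mono_neutral_right) (use fU in \<open>auto simp: U_def f_def restr_def\<close>)
      also have "\<dots> = (\<Sum>y\<in>S m. cnj (f y) * kfun K (S n) (c n) y)"
      proof (intro sum.cong refl)
        fix y
        have "kfun K U (restr (S n) (c n)) y = kfun K (S n) (restr (S n) (c n)) y"
          by (rule kfun_super[OF fU _ restr_vanish]) (simp add: U_def)
        then show "cnj (f y) * kfun K U (restr (S n) (c n)) y = cnj (f y) * kfun K (S n) (c n) y"
          unfolding kfun_restr[of K "S n" "c n"] by simp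
      qed
      finally show ?thesis unfolding U_def .
    qed
    have "(\<lambda>n. \<Sum>y\<in>S m. cnj (f y) * kfun K (S n) (c n) y) \<longlonglongrightarrow> (\<Sum>y\<in>S m. cnj (f y) * delta x y)"
      by (intro tendsto_intros lim)
    also have "(\<Sum>y\<in>S m. cnj (f y) * delta x y) = (\<Sum>y\<in>S m. if y = x then cnj (f y) else 0)"
      by (intro sum.cong refl) (simp add: delta_def)
    also have "\<dots> = \<alpha>" using fS[of m] unfolding \<alpha>_def f_def by (simp add: restr_def)
    finally have "(\<lambda>n. B K (S m \<union> S n) f (restr (S n) (c n))) \<longlonglongrightarrow> \<alpha>" unfolding gam .
    then have "(\<lambda>n. cmod (Q - B K (S m \<union> S n) f (restr (S n) (c n)))) \<longlonglongrightarrow> cmod (Q - \<alpha>)"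
      by (intro tendsto_intros)
    from tendsto_upperbound[OF this ev] have cq: "cmod (Q - \<alpha>) \<le> sqrt (q * \<delta>)" by simp
    have "q = Re \<alpha> + Re (Q - \<alpha>)" unfolding q_def by simp
    also have "\<dots> \<le> cmod \<alpha> + cmod (Q - \<alpha>)" by (intro add_mono complex_Re_le_cmod)
    also have "\<dots> \<le> sqrt q * (sqrt s + sqrt \<delta>)" using ca cq by (simp add: real_sqrt_mult algebra_simps)
    finally have qle: "q \<le> sqrt q * (sqrt s + sqrt \<delta>)" .
    have "sqrt q \<le> sqrt s + sqrt \<delta>"
    proof (cases "q = 0")
      case True then show ?thesis using s0 dp by simp
    next
      case False
      then have sq: "sqrt q > 0" using q0 by simp
      have e: "sqrt q * sqrt q = q" using q0 by simp
      have "sqrt q * sqrt q \<le> sqrt q * (sqrt s + sqrt \<delta>)" by (subst e) (rule qle)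
      then show ?thesis using sq by (rule mult_left_le_imp_le)
    qed
    then have "(sqrt q)^2 \<le> (sqrt s + sqrt \<delta>)^2" using q0 by (intro power_mono) auto
    then show ?thesis using q0 unfolding q_def Q_def f_def qform_restr by simp
  qed
  then show ?thesis unfolding eventually_sequentially s_def A_def by blast
qed
lemma approx_lim:
  assumes pd: "pos_def_kernel K" and inv: "\<And>F. finite F \<Longrightarrow> Kmat_invertible K F"
    and ap: "approx_seq K (delta x) S c"
    and bdd: "bdd_above {Re (Kinv K F x x) | F. finite F \<and> x \<in> F}"
  shows "(\<lambda>n. Re (qform K (S n) (c n))) \<longlonglongrightarrow> Sup {Re (Kinv K F x x) | F. finite F \<and> x \<in> F}"
proof -
  define A where "A = {Re (Kinv K F x x) | F. finite F \<and> x \<in> F}"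
  define s where "s = Sup A"
  have xA: "mm K {x} x \<in> A" unfolding A_def mm_def by auto
  have Ane: "A \<noteq> {}" using xA by blast
  have s0: "s \<ge> 0"
  proof -
    have "mm K {x} x \<le> s" unfolding s_def using xA bdd unfolding A_def by (intro cSup_upper) auto
    then show ?thesis using mm_nonneg[OF pd inv, of "{x}" x] by simp
  qed
  show ?thesis unfolding A_def[symmetric] s_def[symmetric]
  proof (rule order_tendstoI)
    fix a assume "a < s"
    then obtain y where "y \<in> A" "a < y" using less_cSupD[OF Ane] unfolding s_def by blast
    then obtain F where F: "finite F" "x \<in> F" "a < mm K F x" unfolding A_def mm_def by blast
    have "mm K F x - a > 0" using F by simp
    from LB[OF pd inv[OF F(1)] ap F(1,2) this]
    show "eventually (\<lambda>n. a < Re (qform K (S n) (c n))) sequentially" by simp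
  next
    fix a assume sa: "s < a"
    define d where "d = min 1 ((a - s) / (2 * sqrt s + 2))"
    have den: "2 * sqrt s + 2 > 0" using s0 by (simp add: add_nonneg_pos)
    have dpos: "d > 0" unfolding d_def using sa den by (simp add: divide_pos_pos)
    have d1: "d \<le> 1" unfolding d_def by simp
    have d2: "d * (2 * sqrt s + 2) \<le> a - s"
    proof -
      have "d \<le> (a - s) / (2 * sqrt s + 2)" unfolding d_def by simp
      moreover have "2 * sqrt s + 2 > 0" using s0 by (simp add: add_nonneg_pos)
      ultimately show ?thesis by (simp add: pos_le_divide_eq)
    qed
    have dd: "d * d \<le> d" using d1 dpos by (simp add: mult_left_le)
    have sq: "sqrt (d^2) = d" using dpos by simp
    have "(sqrt s + sqrt (d^2))^2 = s + 2 * d * sqrt s + d * d"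
    proof -
      have "sqrt s * sqrt s = s" using s0 by simp
      then show ?thesis unfolding sq power2_eq_square using dpos by (simp add: algebra_simps)
    qed
    also have "\<dots> < a"
    proof -
      have "s + 2 * d * sqrt s + 2 * d \<le> a" using d2 by (simp add: algebra_simps)
      then show ?thesis using dd dpos by linarith
    qed
    finally have lt: "(sqrt s + sqrt (d^2))^2 < a" .
    have "d^2 > 0" using dpos by simp
    from UB[OF pd inv ap bdd this]
    show "eventually (\<lambda>n. Re (qform K (S n) (c n)) < a) sequentially"
    proof (rule eventually_mono)
      fix n assume "Re (qform K (S n) (c n)) \<le> (sqrt (Sup {Re (Kinv K F x x) |F. finite F \<and> x \<in> F}) + sqrt (d\<^sup>2))\<^sup>2"
      then show "Re (qform K (S n) (c n)) < a" using lt unfolding s_def A_def by linarith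
    qed
  qed
qed
lemma restr_gco: "restr F (gco K F x) = gco K F x"
  by (auto simp: restr_def gco_def)

lemma construct:
  assumes pd: "pos_def_kernel K" and inv: "\<And>F. finite F \<Longrightarrow> Kmat_invertible K F"
    and bdd: "bdd_above {Re (Kinv K F x x) | F. finite F \<and> x \<in> F}"
  shows "in_RKHS K (delta x)"
proof -
  define A where "A = {Re (Kinv K F x x) | F. finite F \<and> x \<in> F}"
  define s where "s = Sup A"
  have Ane: "A \<noteq> {}" unfolding A_def by auto
  have "\<exists>F. finite F \<and> x \<in> F \<and> s - inverse (real (Suc n)) < mm K F x" for n
  proof -
    have "s - inverse (real (Suc n)) < s" by simp
    then obtain y where "y \<in> A" "s - inverse (real (Suc n)) < y" using less_cSupD[OF Ane] unfolding s_def by blast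
    then show ?thesis unfolding A_def mm_def by blast
  qed
  then obtain Fc where Fc: "\<And>n. finite (Fc n) \<and> x \<in> Fc n \<and> s - inverse (real (Suc n)) < mm K (Fc n) x"
    by metis
  define G where "G = (\<lambda>n. \<Union>k\<le>n. Fc k)"
  have fG: "finite (G n)" for n unfolding G_def using Fc by auto
  have xG: "x \<in> G n" for n unfolding G_def using Fc by blast
  have Gmono: "m \<le> n \<Longrightarrow> G m \<subseteq> G n" for m n unfolding G_def by (intro UN_mono) auto
  have mle: "mm K F x \<le> s" if "finite F" "x \<in> F" for F
    unfolding s_def mm_def using bdd that unfolding A_def by (intro cSup_upper) auto
  have mG: "s - inverse (real (Suc n)) < mm K (G n) x" for n
  proof -
    have "Fc n \<subseteq> G n" unfolding G_def by auto
    then have "mm K (Fc n) x \<le> mm K (G n) x" using Fc[of n] by (intro mm_mono[OF pd inv inv[OF fG] fG]) auto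
    then show ?thesis using Fc[of n] by linarith
  qed
  define g where "g = (\<lambda>n. gco K (G n) x)"
  have dn: "diff_norm2 K (G m) (g m) (G n) (g n) = mm K (G n) x - mm K (G m) x \<and>
            diff_norm2 K (G n) (g n) (G m) (g m) = mm K (G n) x - mm K (G m) x" if "m \<le> n" for m n
  proof -
    have u1: "G m \<union> G n = G n" "G n \<union> G m = G n" using Gmono[OF that] by auto
    have gm: "Re (B K (G n) (\<lambda>z. g n z - g m z) (\<lambda>z. g n z - g m z)) = mm K (G n) x - mm K (G m) x"
      unfolding g_def by (rule g_mono[OF pd inv[OF fG] inv[OF fG] fG Gmono[OF that] xG])
    show ?thesis unfolding diff_restr u1 g_def restr_gco using gm B_negswap unfolding g_def by metis
  qed
  have cauchy: "\<exists>N. \<forall>m\<ge>N. \<forall>n\<ge>N. diff_norm2 K (G m) (g m) (G n) (g n) < e" if e: "e > 0" for e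
  proof -
    obtain N where N: "inverse (real (Suc N)) < e" using reals_Archimedean[OF e] by blast
    have "diff_norm2 K (G m) (g m) (G n) (g n) < e" if "m \<ge> N" "n \<ge> N" for m n
    proof -
      have inv_le: "inverse (real (Suc k)) \<le> inverse (real (Suc N))" if "k \<ge> N" for k
        using that by (simp add: le_imp_inverse_le)
      show ?thesis
      proof (cases "m \<le> n")
        case True
        then have "diff_norm2 K (G m) (g m) (G n) (g n) = mm K (G n) x - mm K (G m) x" using dn by blast
        also have "\<dots> < inverse (real (Suc m))" using mle[OF fG xG, of n] mG[of m] by linarith
        finally show ?thesis using inv_le[OF \<open>m \<ge> N\<close>] N by linarith
      next
        case False
        then have "diff_norm2 K (G m) (g m) (G n) (g n) = mm K (G m) x - mm K (G n) x" using dn[of n m] by simp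
        also have "\<dots> < inverse (real (Suc n))" using mle[OF fG xG, of m] mG[of n] by linarith
        finally show ?thesis using inv_le[OF \<open>n \<ge> N\<close>] N by linarith
      qed
    qed
    then show ?thesis by blast
  qed
  have Kyy: "Re (K y y) \<ge> 0" for y
    using pdk(2)[OF pd, of "{y}" "\<lambda>_. 1"] by (simp add: qform_def)
  have pw: "(\<lambda>n. kfun K (G n) (g n) y) \<longlonglongrightarrow> delta x y" for y
  proof -
    have bnd: "norm (kfun K (G n) (g n) y - delta x y) \<le> sqrt (inverse (real (Suc n)) * Re (K y y))" for n
    proof -
      define H where "H = insert y (G n)"
      have fH: "finite H" "G n \<subseteq> H" "y \<in> H" "x \<in> H" using fG xG unfolding H_def by auto
      define h where "h = gco K H x"
      have "kfun K (G n) (g n) y - delta x y = kfun K H (g n) y - kfun K H h y"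
        unfolding h_def g_def g_eval[OF inv[OF fH(1)] fH(3) fH(4)] kfun_super[OF fH(1) fH(2) gco_vanish] ..
      also have "\<dots> = kfun K H (\<lambda>z. g n z - h z) y" by (simp add: kfun_diff)
      finally have e1: "kfun K (G n) (g n) y - delta x y = kfun K H (\<lambda>z. g n z - h z) y" .
      have "Re (B K H (\<lambda>z. g n z - h z) (\<lambda>z. g n z - h z)) = mm K H x - mm K (G n) x"
        unfolding h_def g_def by (subst B_negswap) (rule g_mono[OF pd inv[OF fG] inv[OF fH(1)] fH(1,2) xG])
      also have "\<dots> < inverse (real (Suc n))" using mle[OF fH(1) fH(4)] mG[of n] by linarith
      finally have e2: "Re (B K H (\<lambda>z. g n z - h z) (\<lambda>z. g n z - h z)) \<le> inverse (real (Suc n))" by simp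
      have "(norm (kfun K (G n) (g n) y - delta x y))^2 \<le> Re (B K H (\<lambda>z. g n z - h z) (\<lambda>z. g n z - h z)) * Re (K y y)"
        unfolding e1 using pt_bound[OF pd fH(1) fH(3)] by simp
      also have "\<dots> \<le> inverse (real (Suc n)) * Re (K y y)" using e2 Kyy[of y] by (rule mult_right_mono)
      finally show ?thesis using real_le_rsqrt by blast
    qed
    have "(\<lambda>n. sqrt (inverse (real (Suc n)) * Re (K y y))) \<longlonglongrightarrow> sqrt (0 * Re (K y y))"
      by (intro tendsto_intros LIMSEQ_inverse_real_of_nat)
    have "(\<lambda>n. kfun K (G n) (g n) y - delta x y) \<longlonglongrightarrow> 0"
    proof (rule tendsto_0_le[where K=1])
      show "(\<lambda>n. sqrt (inverse (real (Suc n)) * Re (K y y))) \<longlonglongrightarrow> 0" using \<open>_ \<longlonglongrightarrow> sqrt (0 * Re (K y y))\<close> by simp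
      show "\<forall>\<^sub>F n in sequentially. norm (kfun K (G n) (g n) y - delta x y) \<le> norm (sqrt (inverse (real (Suc n)) * Re (K y y))) * 1"
      proof (rule always_eventually, rule allI)
        fix n
        have "0 \<le> inverse (real (Suc n)) * Re (K y y)" using Kyy[of y] by simp
        then show "norm (kfun K (G n) (g n) y - delta x y) \<le> norm (sqrt (inverse (real (Suc n)) * Re (K y y))) * 1"
          using bnd[of n] by simp
      qed
    qed
    then show ?thesis by (rule LIM_zero_cancel)
  qed
  have "approx_seq K (delta x) G g" unfolding approx_seq_def using fG cauchy pw by blast
  then show ?thesis unfolding in_RKHS_def by blast
qed
theorem corollary8p7:
  fixes K :: "'a \<Rightarrow> 'a \<Rightarrow> complex" and x :: 'a
  assumes "pos_def_kernel K"
    and "\<And>F. finite F \<Longrightarrow> Kmat_invertible K F"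
  shows "(in_RKHS K (delta x) \<longleftrightarrow> bdd_above {Re (Kinv K F x x) | F. finite F \<and> x \<in> F}) \<and>
         (in_RKHS K (delta x) \<longrightarrow>
           RKHS_norm2 K (delta x) = Sup {Re (Kinv K F x x) | F. finite F \<and> x \<in> F})"
proof -
  note pd = assms(1) and inv = assms(2)
  define A where "A = {Re (Kinv K F x x) | F. finite F \<and> x \<in> F}"
  have d1: "bdd_above A" if h1: "in_RKHS K (delta x)"
  proof -
    obtain S c where "approx_seq K (delta x) S c" using h1 unfolding in_RKHS_def by blast
    then show ?thesis unfolding A_def by (rule approx_bdd[OF pd inv, rotated]) simp
  qed
  have d2: "in_RKHS K (delta x)" if "bdd_above A"
    using construct[OF pd inv] that unfolding A_def by blast
  have d3: "RKHS_norm2 K (delta x) = Sup A" if h: "in_RKHS K (delta x)"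
  proof -
    have bdd: "bdd_above A" by (rule d1[OF h])
    define P where "P = (\<lambda>r. \<exists>S c. approx_seq K (delta x) S c \<and> (\<lambda>n. Re (qform K (S n) (c n))) \<longlonglongrightarrow> r)"
    obtain S c where ap: "approx_seq K (delta x) S c" using h unfolding in_RKHS_def by blast
    have "P (Sup A)" unfolding P_def A_def using ap approx_lim[OF pd inv ap bdd[unfolded A_def]] by blast
    then have "P (SOME r. P r)" by (rule someI)
    then obtain S' c' where ap': "approx_seq K (delta x) S' c'"
      and l1: "(\<lambda>n. Re (qform K (S' n) (c' n))) \<longlonglongrightarrow> (SOME r. P r)" unfolding P_def by blast
    have l2: "(\<lambda>n. Re (qform K (S' n) (c' n))) \<longlonglongrightarrow> Sup A"
      unfolding A_def by (rule approx_lim[OF pd inv ap' bdd[unfolded A_def]])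
    have "(SOME r. P r) = Sup A" using LIMSEQ_unique[OF l1 l2] .
    then show ?thesis unfolding RKHS_norm2_def P_def .
  qed
  show ?thesis unfolding A_def[symmetric]
  proof (intro conjI iffI impI)
    show "bdd_above A" if "in_RKHS K (delta x)" using d1 that .
    show "in_RKHS K (delta x)" if "bdd_above A" using d2 that .
    show "RKHS_norm2 K (delta x) = Sup A" if "in_RKHS K (delta x)" using d3 that .
  qed
qed

end
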